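(* Let $N\ge2$, $d\ge1$ and consider the system $$\dot x_i(t)=\frac{\lambda_i(x)}{N}\sum_{j=1}^N M_{ij}(t)\,\phi_{ij}(x_i,x_j)\,(x_j(t)-x_i(t)),\qquad i=1,\dots,N,$$ with $x_i\in\mathbb{R}^d$, where all $M_{ij}:[0,+\infty)\to[0,1]$ are Lebesgue measurable and $\lambda_i:\mathbb{R}^{Nd}\to\mathbb{R}^+$, $\phi_{ij}:\mathbb{R}^d\times\mathbb{R}^d\to\mathbb{R}^+$ are Lipschitz continuous and strictly positive. Let $x(t)$ be a (Carathéodory) solution and let $\underline m,\overline m$ be the minimum and maximum of $\lambda_i(y)\phi_{ij}(y_i,y_j)$ over all $i,j\in\{1,\dots,N\}$ and all $y\in\mathbb{R}^{Nd}$ with $|y_k|\le\max_l|x_l(0)|$ for every $k$. Assume the Persistent Excitation condition holds with parameters $(T,\mu)$, $T,\mu>0$: for all indices $i,j$ and all $t\ge0$, $\frac1T\int_t^{t+T}M_{ij}(s)\,ds\ge\mu$. Then for all $n\in\mathbb{N}$, $$\max_{i,j}|x_i(nT)-x_j(nT)|\le C^n\max_{i,j}|x_i(0)-x_j(0)|,\qquad C=1-\frac12\left(\frac{\underline m\mu T}{N+\underline m\mu T}\right)\exp\!\left(-2\tfrac{N-1}{N}T\overline m\right).$$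
   Context: $|\cdot|$ is the Euclidean norm; $\mathbb{N}$ includes $0$. *)

theory Defs
  imports "HOL-Analysis.Analysis"
begin

text \<open>Agents are indexed by a finite type 'n (N = CARD('n)), space dimension by a
finite type 'd (d = CARD('d)). A configuration is y :: real^'d^'n, y $ i \<in> R^d.\<close>

definition rhs ::
  "('n::finite \<Rightarrow> real^'d^'n \<Rightarrow> real) \<Rightarrow> ('n \<Rightarrow> 'n \<Rightarrow> real^'d \<Rightarrow> real^'d \<Rightarrow> real)
   \<Rightarrow> ('n \<Rightarrow> 'n \<Rightarrow> real \<Rightarrow> real) \<Rightarrow> real \<Rightarrow> real^'d^'n \<Rightarrow> real^'d^'n" where
  "rhs lam phi M t y = (\<chi> i. (lam i y / real CARD('n)) *\<^sub>R
      (\<Sum>j\<in>UNIV. (M i j t * phi i j (y $ i) (y $ j)) *\<^sub>R (y $ j - y $ i)))"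

definition caratheodory_solution ::
  "('n::finite \<Rightarrow> real^'d^'n \<Rightarrow> real) \<Rightarrow> ('n \<Rightarrow> 'n \<Rightarrow> real^'d \<Rightarrow> real^'d \<Rightarrow> real)
   \<Rightarrow> ('n \<Rightarrow> 'n \<Rightarrow> real \<Rightarrow> real) \<Rightarrow> (real \<Rightarrow> real^'d^'n) \<Rightarrow> bool" where
  "caratheodory_solution lam phi M x \<longleftrightarrow>
     (\<forall>t\<ge>0. ((\<lambda>s. rhs lam phi M s (x s)) has_integral (x t - x 0)) {0..t})"

definition diam_conf :: "real^'d^'n::finite \<Rightarrow> real" where
  "diam_conf y = Max {norm (y $ i - y $ j) | i j. True}"

definition radius_conf :: "real^'d^'n::finite \<Rightarrow> real" where
  "radius_conf y = Max {norm (y $ l) | l. True}"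

definition m_low :: "('n::finite \<Rightarrow> real^'d^'n \<Rightarrow> real) \<Rightarrow> ('n \<Rightarrow> 'n \<Rightarrow> real^'d \<Rightarrow> real^'d \<Rightarrow> real)
   \<Rightarrow> real \<Rightarrow> real" where
  "m_low lam phi R = Inf {lam i y * phi i j (y $ i) (y $ j) | i j y. \<forall>k. norm (y $ k) \<le> R}"

definition m_up :: "('n::finite \<Rightarrow> real^'d^'n \<Rightarrow> real) \<Rightarrow> ('n \<Rightarrow> 'n \<Rightarrow> real^'d \<Rightarrow> real^'d \<Rightarrow> real)
   \<Rightarrow> real \<Rightarrow> real" where
  "m_up lam phi R = Sup {lam i y * phi i j (y $ i) (y $ j) | i j y. \<forall>k. norm (y $ k) \<le> R}"

end

theory Submission
  imports Defs
begin


lemma dini_mono: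
  fixes Z :: "real \<Rightarrow> real"
  assumes st: "s \<le> t" and cont: "continuous_on {s..t} Z"
    and loc: "\<And>r e. s \<le> r \<Longrightarrow> r < t \<Longrightarrow> e > 0 \<Longrightarrow>
       \<exists>\<delta>>0. \<forall>d. 0 < d \<and> d \<le> \<delta> \<and> r + d \<le> t \<longrightarrow> Z (r + d) \<ge> Z r - e * d"
  shows "Z s \<le> Z t"
proof -
  have key: "Z t \<ge> Z s - e * (t - s)" if e: "e > 0" for e
  proof (rule ccontr)
    assume nt: "\<not> Z t \<ge> Z s - e * (t - s)"
    define A where "A = {r\<in>{s..t}. Z r < Z s - e * (r - s)}"
    have tA: "t \<in> A" using nt st by (auto simp: A_def)
    have bdd: "bdd_below A" unfolding A_def by (rule bdd_belowI[of _ s]) auto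
    define r where "r = Inf A"
    have rt: "r \<le> t" unfolding r_def using cInf_lower[OF tA bdd] .
    have sr: "s \<le> r" unfolding r_def using tA by (intro cInf_greatest) (auto simp: A_def)
    have lowA: "\<And>q. q \<in> A \<Longrightarrow> r \<le> q" unfolding r_def using bdd by (simp add: cInf_lower)
    have Zr: "Z r \<ge> Z s - e * (r - s)"
    proof (rule ccontr)
      assume nZ: "\<not> ?thesis"
      define gap where "gap = Z s - e * (r - s) - Z r"
      have gap: "gap > 0" using nZ by (simp add: gap_def)
      have "r \<in> {s..t}" using sr rt by auto
      then obtain \<eta> where \<eta>: "\<eta> > 0" and h: "\<And>q. q \<in> {s..t} \<Longrightarrow> dist q r < \<eta> \<Longrightarrow> dist (Z q) (Z r) < gap"
        using cont gap unfolding continuous_on_iff by metis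
      have "r \<noteq> s" using nZ by auto
      define q where "q = max s (r - \<eta>/2)"
      have q1: "q \<in> {s..t}" "dist q r < \<eta>" "q < r" using sr rt \<eta> \<open>r \<noteq> s\<close>
        by (auto simp: q_def dist_real_def)
      have "Z q < Z r + gap" using h[OF q1(1,2)] by (simp add: dist_real_def)
      also have "\<dots> = Z s - e * (r - s)" by (simp add: gap_def)
      also have "\<dots> \<le> Z s - e * (q - s)" using q1 e by (simp add: mult_left_mono)
      finally have "q \<in> A" using q1 by (auto simp: A_def)
      with lowA q1 show False by fastforce
    qed
    have "r \<noteq> t" using Zr tA by (auto simp: A_def)
    with rt have "r < t" by simp
    from loc[OF sr this, of "e/2"] e obtain \<delta> where \<delta>: "\<delta> > 0"
      and hd: "\<And>d. 0 < d \<Longrightarrow> d \<le> \<delta> \<Longrightarrow> r + d \<le> t \<Longrightarrow> Z (r + d) \<ge> Z r - e/2 * d" by auto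
    define d0 where "d0 = min \<delta> (t - r)"
    have d0: "d0 > 0" using \<delta> \<open>r < t\<close> by (simp add: d0_def)
    have "r + d0 \<le> r"
    proof -
      have "r + d0 \<le> q" if qA: "q \<in> A" for q
      proof (rule ccontr)
        assume "\<not> r + d0 \<le> q"
        have rq: "r \<le> q" using lowA qA by auto
        have "q \<noteq> r" using qA Zr by (auto simp: A_def)
        define d where "d = q - r"
        have d: "0 < d" "d \<le> \<delta>" "r + d \<le> t" using rq \<open>q \<noteq> r\<close> \<open>\<not> r + d0 \<le> q\<close>
          by (auto simp: d_def d0_def)
        have "Z q \<ge> Z r - e/2 * d" using hd[OF d] by (simp add: d_def)
        moreover have "e/2 * d \<le> e * d" using d e by simp
        moreover have "e * (q - s) = e * (r - s) + e * d" by (simp add: d_def algebra_simps)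
        ultimately have "Z q \<ge> Z s - e * (q - s)" using Zr by linarith
        thus False using qA by (auto simp: A_def)
      qed
      hence "r + d0 \<le> Inf A" using tA by (intro cInf_greatest) auto
      thus ?thesis unfolding r_def .
    qed
    thus False using d0 by simp
  qed
  show ?thesis
  proof (rule ccontr)
    assume "\<not> ?thesis"
    hence lt: "Z t < Z s" by simp
    with st have "t \<noteq> s" by auto
    with st have ts: "t - s > 0" by simp
    define e where "e = (Z s - Z t) / (2 * (t - s))"
    have e: "e > 0" using lt ts by (simp add: e_def)
    have eq: "e * (t - s) = (Z s - Z t) / 2" using ts by (simp add: e_def field_simps)
    have "Z s - e * (t - s) \<le> Z t" using key[OF e] .
    hence "Z s - (Z s - Z t) / 2 \<le> Z t" by (simp only: eq)
    with lt show False by (simp add: field_simps)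
  qed
qed

lemma gronwall_lower:
  fixes y h :: "real \<Rightarrow> real"
  assumes st: "s \<le> t" and ycont: "continuous_on {s..t} y"
    and ynn: "\<And>r. r \<in> {s..t} \<Longrightarrow> y r \<ge> 0"
    and hint: "h integrable_on {s..t}" and hnn: "\<And>r. r \<in> {s..t} \<Longrightarrow> h r \<ge> 0"
    and k: "\<kappa> \<ge> 0"
    and ineq: "\<And>a b. s \<le> a \<Longrightarrow> a \<le> b \<Longrightarrow> b \<le> t \<Longrightarrow>
       y b - y a \<ge> integral {a..b} h - \<kappa> * integral {a..b} y"
  shows "y t \<ge> exp (- \<kappa> * (t - s)) * (y s + integral {s..t} h)"
proof -
  define Z where "Z r = exp (\<kappa> * (r - s)) * y r - integral {s..r} h" for r
  have Zc: "continuous_on {s..t} Z" unfolding Z_def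
    by (intro continuous_intros ycont indefinite_integral_continuous_1 hint)
  have "Z s \<le> Z t"
  proof (rule dini_mono[OF st Zc])
    fix r e :: real
    assume sr: "s \<le> r" and rt: "r < t" and e: "e > 0"
    define E where "E = exp (\<kappa> * (r - s))"
    have E1: "E \<ge> 1" using sr k by (simp add: E_def)
    define yr where "yr = y r"
    have yr0: "yr \<ge> 0" using ynn sr rt by (simp add: yr_def)
    define \<eta> where "\<eta> = e / (2 * (E * \<kappa> + 1))"
    have Ek: "E * \<kappa> \<ge> 0" using E1 k by simp
    have \<eta>: "\<eta> > 0" unfolding \<eta>_def using e Ek by (intro divide_pos_pos) auto
    have E\<eta>: "E * \<kappa> * \<eta> \<le> e / 2"
    proof -
      have "E * \<kappa> * \<eta> = e / 2 * (E * \<kappa> / (E * \<kappa> + 1))"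
        using E1 k by (simp add: \<eta>_def field_simps)
      also have "\<dots> \<le> e / 2 * 1" using e Ek
        by (intro mult_left_mono) (auto simp: divide_le_eq_1)
      finally show ?thesis by simp
    qed
    have rin: "r \<in> {s..t}" using sr rt by auto
    obtain \<delta>1 where \<delta>1: "\<delta>1 > 0" and hc: "\<And>q. q \<in> {s..t} \<Longrightarrow> dist q r < \<delta>1 \<Longrightarrow> dist (y q) (y r) < \<eta>"
      using ycont rin \<eta> unfolding continuous_on_iff by metis
    define \<delta> where "\<delta> = min (\<delta>1 / 2) (e / (2 * (E * \<kappa>\<^sup>2 * (yr + \<eta>) + 1)))"
    have pos2: "E * \<kappa>\<^sup>2 * (yr + \<eta>) \<ge> 0" using E1 yr0 \<eta> by simp
    have \<delta>: "\<delta> > 0" unfolding \<delta>_def using \<delta>1 e pos2 by (auto intro!: divide_pos_pos)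
    show "\<exists>\<delta>>0. \<forall>d. 0 < d \<and> d \<le> \<delta> \<and> r + d \<le> t \<longrightarrow> Z (r + d) \<ge> Z r - e * d"
    proof (intro exI[of _ \<delta>] conjI allI impI \<delta>)
      fix d assume d: "0 < d \<and> d \<le> \<delta> \<and> r + d \<le> t"
      have dd1: "d < \<delta>1" using d \<delta>1 by (simp add: \<delta>_def)
      have dd2: "E * \<kappa>\<^sup>2 * (yr + \<eta>) * d \<le> e / 2"
      proof -
        have "d \<le> e / (2 * (E * \<kappa>\<^sup>2 * (yr + \<eta>) + 1))" using d by (simp add: \<delta>_def)
        hence "d * (2 * (E * \<kappa>\<^sup>2 * (yr + \<eta>) + 1)) \<le> e"
          using pos2 by (simp add: field_simps add_pos_nonneg)
        thus ?thesis using d by (simp add: algebra_simps)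
      qed
      define y' where "y' = y (r + d)"
      have y'0: "y' \<ge> 0" using ynn d sr by (simp add: y'_def)
      define H where "H = integral {r..r+d} h"
      define I where "I = integral {r..r+d} y"
      have H0: "H \<ge> 0" unfolding H_def
        using d sr hnn by (intro integral_nonneg integrable_on_subinterval[OF hint]) auto
      have Icont: "continuous_on {r..r+d} y" using d sr by (intro continuous_on_subset[OF ycont]) auto
      have "I \<le> integral {r..r+d} (\<lambda>_. yr + \<eta>)" unfolding I_def
      proof (rule integral_le)
        show "y integrable_on {r..r+d}" using Icont by (rule integrable_continuous_interval)
        fix q assume q: "q \<in> {r..r+d}"
        hence "dist (y q) (y r) < \<eta>" using d sr dd1 by (intro hc) (auto simp: dist_real_def)
        thus "y q \<le> yr + \<eta>" by (simp add: dist_real_def yr_def)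
      qed auto
      hence I: "I \<le> d * (yr + \<eta>)" using d by simp
      have y'ge: "y' \<ge> yr + H - \<kappa> * (d * (yr + \<eta>))"
      proof -
        have "y' - yr \<ge> H - \<kappa> * I" unfolding y'_def yr_def H_def I_def
          using ineq[of r "r + d"] sr d by simp
        moreover have "\<kappa> * I \<le> \<kappa> * (d * (yr + \<eta>))" using I k by (rule mult_left_mono)
        ultimately show ?thesis by linarith
      qed
      have ex: "exp (\<kappa> * d) \<ge> 1 + \<kappa> * d" by (rule exp_ge_add_one_self)
      have Zrd: "Z (r + d) = E * exp (\<kappa> * d) * y' - (integral {s..r} h + H)"
      proof -
        have "integral {s..r} h + integral {r..r+d} h = integral {s..r+d} h"
          using d sr by (intro Henstock_Kurzweil_Integration.integral_combine integrable_on_subinterval[OF hint]) auto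
        moreover have "exp (\<kappa> * (r + d - s)) = E * exp (\<kappa> * d)"
          unfolding E_def mult_exp_exp by (simp add: algebra_simps)
        ultimately show ?thesis by (simp add: Z_def y'_def H_def)
      qed
      have Zr: "Z r = E * yr - integral {s..r} h" by (simp add: Z_def E_def yr_def)
      have A1: "E * exp (\<kappa> * d) * y' \<ge> E * (1 + \<kappa> * d) * y'"
        using ex E1 y'0 by (intro mult_right_mono mult_left_mono) auto
      have A2: "E * (1 + \<kappa> * d) * y' \<ge> E * (1 + \<kappa> * d) * (yr + H - \<kappa> * (d * (yr + \<eta>)))"
        using y'ge E1 k d by (intro mult_left_mono) auto
      have A3: "E * (1 + \<kappa> * d) * (yr + H - \<kappa> * (d * (yr + \<eta>))) - E * yr - H
          = (E - 1) * H + E * \<kappa> * d * H - d * (E * \<kappa> * \<eta>) - d * (E * \<kappa>\<^sup>2 * (yr + \<eta>) * d)"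
        by (simp add: algebra_simps power2_eq_square)
      have A4: "(E - 1) * H + E * \<kappa> * d * H \<ge> 0" using E1 H0 k d by simp
      have A5: "d * (E * \<kappa> * \<eta>) \<le> d * (e/2)" using E\<eta> d by (intro mult_left_mono) auto
      have A6: "d * (E * \<kappa>\<^sup>2 * (yr + \<eta>) * d) \<le> d * (e/2)" using dd2 d by (intro mult_left_mono) auto
      show "Z (r + d) \<ge> Z r - e * d"
        unfolding Zrd Zr using A1 A2 A3 A4 A5 A6 by (simp add: algebra_simps)
    qed
  qed
  hence "y s \<le> exp (\<kappa> * (t - s)) * y t - integral {s..t} h" by (simp add: Z_def)
  hence "y s + integral {s..t} h \<le> exp (\<kappa> * (t - s)) * y t" by simp
  hence "exp (- \<kappa> * (t - s)) * (y s + integral {s..t} h) \<le> exp (- \<kappa> * (t - s)) * (exp (\<kappa> * (t - s)) * y t)"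
    by (intro mult_left_mono) auto
  also have "\<dots> = y t" by (simp add: mult.assoc[symmetric] mult_exp_exp)
  finally show ?thesis .
qed



lemma continuous_on_Min_fin:
  fixes g :: "'i \<Rightarrow> real \<Rightarrow> real"
  assumes "finite I" "I \<noteq> {}" "\<And>i. i \<in> I \<Longrightarrow> continuous_on S (g i)"
  shows "continuous_on S (\<lambda>t. Min ((\<lambda>i. g i t) ` I))"
  using assms
proof (induction I rule: finite_ne_induct)
  case (singleton i)
  then show ?case by simp
next
  case (insert i I)
  have "continuous_on S (\<lambda>t. min (g i t) (Min ((\<lambda>i. g i t) ` I)))"
    using insert by (intro continuous_on_min) auto
  moreover have "\<And>t. Min ((\<lambda>i. g i t) ` insert i I) = min (g i t) (Min ((\<lambda>i. g i t) ` I))"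
    using insert by (simp add: Min_insert)
  ultimately show ?case by simp
qed

lemma compact_confs: "compact {y :: real^'d::finite^'n::finite. \<forall>k. norm (y $ k) \<le> R}"
unfolding compact_eq_bounded_closed
proof (rule conjI[rotated])
  have "{y :: real^'d^'n. \<forall>k. norm (y $ k) \<le> R} = (\<Inter>k. {y. norm (y $ k) \<le> R})" by auto
  moreover have "closed (\<Inter>k. {y :: real^'d^'n. norm (y $ k) \<le> R})"
    by (intro closed_INT ballI closed_Collect_le continuous_intros)
  ultimately show "closed {y :: real^'d^'n. \<forall>k. norm (y $ k) \<le> R}" by simp
  show "bounded {y :: real^'d^'n. \<forall>k. norm (y $ k) \<le> R}"
    unfolding bounded_iff
  proof (intro exI ballI)
    fix y :: "real^'d^'n" assume "y \<in> {y. \<forall>k. norm (y $ k) \<le> R}"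
    hence y: "\<And>k. norm (y $ k) \<le> R" by auto
    have "norm y \<le> (\<Sum>k\<in>UNIV. norm (y $ k))"
      unfolding norm_vec_def by (rule L2_set_le_sum) auto
    also have "\<dots> \<le> (\<Sum>k\<in>(UNIV::'n set). R)" by (intro sum_mono y)
    finally show "norm y \<le> real CARD('n) * R" by simp
  qed
qed

lemma bdd_LP:
  fixes lam :: "'n::finite \<Rightarrow> real^'d::finite^'n \<Rightarrow> real"
    and phi :: "'n \<Rightarrow> 'n \<Rightarrow> real^'d \<Rightarrow> real^'d \<Rightarrow> real"
  assumes lc: "\<And>i. continuous_on UNIV (lam i)"
    and pc: "\<And>i j. continuous_on UNIV (\<lambda>(a, b). phi i j a b)"
  shows "bdd_above {lam i y * phi i j (y $ i) (y $ j) | i j y. \<forall>k. norm (y $ k) \<le> R}"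
proof -
  let ?K = "{y :: real^'d^'n. \<forall>k. norm (y $ k) \<le> R}"
  have eq: "{lam i y * phi i j (y $ i) (y $ j) | i j y. \<forall>k. norm (y $ k) \<le> R}
     = (\<Union>ij\<in>UNIV. (\<lambda>y. lam (fst ij) y * phi (fst ij) (snd ij) (y $ fst ij) (y $ snd ij)) ` ?K)"
    by force
  have "bounded (\<Union>ij\<in>UNIV. (\<lambda>y. lam (fst ij) y * phi (fst ij) (snd ij) (y $ fst ij) (y $ snd ij)) ` ?K)"
  proof (intro bounded_UN ballI finite_UNIV compact_imp_bounded compact_continuous_image compact_confs)
    fix ij :: "'n \<times> 'n"
    obtain i j where ij: "ij = (i, j)" by (cases ij)
    have c2: "continuous_on UNIV (\<lambda>y :: real^'d^'n. phi i j (y $ i) (y $ j))"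
    proof -
      have "continuous_on UNIV ((\<lambda>(a, b). phi i j a b) \<circ> (\<lambda>y :: real^'d^'n. (y $ i, y $ j)))"
        by (intro continuous_on_compose continuous_intros continuous_on_subset[OF pc]) auto
      thus ?thesis by (simp add: o_def)
    qed
    show "continuous_on ?K (\<lambda>y. lam (fst ij) y * phi (fst ij) (snd ij) (y $ fst ij) (y $ snd ij))"
      unfolding ij fst_conv snd_conv
      by (intro continuous_on_mult continuous_on_subset[OF lc] continuous_on_subset[OF c2]) auto
  qed simp
  thus ?thesis unfolding eq by (rule bounded_imp_bdd_above)
qed



locale sys =
  fixes lam :: "'n::finite \<Rightarrow> real^'d::finite^'n \<Rightarrow> real"
    and phi :: "'n \<Rightarrow> 'n \<Rightarrow> real^'d \<Rightarrow> real^'d \<Rightarrow> real"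
    and M :: "'n \<Rightarrow> 'n \<Rightarrow> real \<Rightarrow> real"
    and x :: "real \<Rightarrow> real^'d^'n"
    and T \<mu> :: real
  assumes N2: "CARD('n) \<ge> 2"
    and M_meas: "\<And>i j. M i j \<in> borel_measurable (lebesgue_on {0..})"
    and M_range: "\<And>i j t. t \<ge> 0 \<Longrightarrow> 0 \<le> M i j t \<and> M i j t \<le> 1"
    and lam_lip: "\<And>i. \<exists>L. L-lipschitz_on UNIV (lam i)"
    and lam_pos: "\<And>i y. lam i y > 0"
    and phi_lip: "\<And>i j. \<exists>L. L-lipschitz_on UNIV (\<lambda>(a, b). phi i j a b)"
    and phi_pos: "\<And>i j a b. phi i j a b > 0"
    and sol: "caratheodory_solution lam phi M x"
    and T_pos: "T > 0" and mu_pos: "\<mu> > 0"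
    and PE: "\<And>i j t. t \<ge> 0 \<Longrightarrow> (1 / T) * integral {t..t+T} (M i j) \<ge> \<mu>"
begin

definition f where "f s = rhs lam phi M s (x s)"
definition a where "a i j s = lam i (x s) * M i j s * phi i j (x s $ i) (x s $ j) / real CARD('n)"
definition p where "p v i t = (x t $ i) \<bullet> v"

lemma f_hasint0: "0 \<le> t \<Longrightarrow> (f has_integral (x t - x 0)) {0..t}"
  using sol unfolding caratheodory_solution_def f_def by auto

lemma f_hasint: assumes "0 \<le> s" "s \<le> t" shows "(f has_integral (x t - x s)) {s..t}"
proof -
  have it: "f integrable_on {0..t}" using f_hasint0[of t] assms by (auto intro: has_integral_integrable)
  have "integral {0..s} f + integral {s..t} f = integral {0..t} f"
    using assms it by (intro Henstock_Kurzweil_Integration.integral_combine) auto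
  moreover have "integral {0..s} f = x s - x 0" "integral {0..t} f = x t - x 0"
    using f_hasint0 assms by (auto intro: integral_unique)
  ultimately have "integral {s..t} f = x t - x s" by (simp add: algebra_simps)
  moreover have "f integrable_on {s..t}" using it assms by (intro integrable_on_subinterval) auto
  ultimately show ?thesis using integrable_integral by metis
qed

lemma x_cont: "continuous_on {0..b} x"
proof -
  have "continuous_on {0..b} (\<lambda>t. x 0 + integral {0..t} f)"
  proof (cases "b \<ge> 0")
    case True
    then show ?thesis using f_hasint0[of b]
      by (intro continuous_intros indefinite_integral_continuous_1) auto
  qed simp
  moreover have "\<And>t. t \<in> {0..b} \<Longrightarrow> x 0 + integral {0..t} f = x t"
    by (subst integral_unique[OF f_hasint0]) auto
  ultimately show ?thesis using continuous_on_eq by blast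
qed

lemma p_cont: "continuous_on {0..b} (p v i)"
  unfolding p_def by (intro continuous_intros continuous_on_compose2[OF _ x_cont[of b]]) auto

lemma f_comp: "(f q $ i) \<bullet> v = (\<Sum>j\<in>UNIV. a i j q * (p v j q - p v i q))"
  by (simp add: f_def rhs_def a_def p_def inner_sum_left inner_diff_left sum_distrib_left algebra_simps diff_divide_distrib)

lemma p_hasint: assumes "0 \<le> s" "s \<le> t"
  shows "((\<lambda>q. \<Sum>j\<in>UNIV. a i j q * (p v j q - p v i q)) has_integral (p v i t - p v i s)) {s..t}"
proof -
  have bl: "bounded_linear (\<lambda>y :: real^'d^'n. (y $ i) \<bullet> v)"
    by (intro bounded_linear_compose[OF bounded_linear_inner_left] bounded_linear_vec_nth)
  have "((\<lambda>y. (y $ i) \<bullet> v) \<circ> f has_integral ((x t - x s) $ i) \<bullet> v) {s..t}"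
    by (rule has_integral_linear[OF f_hasint[OF assms] bl])
  thus ?thesis by (simp add: o_def f_comp p_def inner_diff_left)
qed

lemma lam_cont: "continuous_on UNIV (lam i)"
  using lam_lip[of i] lipschitz_on_continuous_on by blast

lemma phi_cont: "continuous_on UNIV (\<lambda>(a, b). phi i j a b)"
  using phi_lip[of i j] lipschitz_on_continuous_on by blast

lemma bddLP: "bdd_above {lam i y * phi i j (y $ i) (y $ j) | i j y. \<forall>k. norm (y $ k) \<le> R}"
  by (rule bdd_LP[OF lam_cont phi_cont])

lemma a_nonneg: "q \<ge> 0 \<Longrightarrow> a i j q \<ge> 0"
  unfolding a_def using M_range[of q i j] lam_pos[of i "x q"] phi_pos[of i j "x q $ i" "x q $ j"]
  by (intro divide_nonneg_nonneg mult_nonneg_nonneg) auto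

lemma a_le: assumes "q \<ge> 0" "\<forall>k. norm (x q $ k) \<le> B"
  shows "a i j q \<le> m_up lam phi B / real CARD('n)"
proof -
  have "lam i (x q) * phi i j (x q $ i) (x q $ j) \<le> m_up lam phi B"
    unfolding m_up_def using assms by (intro cSup_upper bddLP) auto
  moreover have "M i j q \<le> 1" "0 \<le> M i j q" using M_range assms by auto
  moreover have "lam i (x q) * phi i j (x q $ i) (x q $ j) > 0" using lam_pos phi_pos by simp
  ultimately have "M i j q * (lam i (x q) * phi i j (x q $ i) (x q $ j)) \<le> 1 * m_up lam phi B"
    by (intro mult_mono) auto
  hence "lam i (x q) * M i j q * phi i j (x q $ i) (x q $ j) \<le> m_up lam phi B"
    by (simp add: ac_simps)
  thus ?thesis unfolding a_def by (simp add: divide_right_mono)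
qed

lemma a_ge: assumes "q \<ge> 0" "\<forall>k. norm (x q $ k) \<le> B"
  shows "a i j q \<ge> m_low lam phi B * M i j q / real CARD('n)"
proof -
  have "lam i (x q) * phi i j (x q $ i) (x q $ j) \<ge> m_low lam phi B"
    unfolding m_low_def using assms lam_pos phi_pos
    by (intro cInf_lower) (auto intro!: bdd_belowI[of _ 0] less_imp_le)
  moreover have "0 \<le> M i j q" using M_range assms by auto
  ultimately have "lam i (x q) * M i j q * phi i j (x q $ i) (x q $ j) \<ge> m_low lam phi B * M i j q"
    by (metis mult.commute mult.left_commute mult_right_mono)
  thus ?thesis unfolding a_def by (simp add: divide_right_mono)
qed

lemma m_low_nonneg: assumes "B \<ge> 0" shows "m_low lam phi B \<ge> 0"
  unfolding m_low_def
proof (rule cInf_greatest)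
  show "{lam i y * phi i j (y $ i) (y $ j) |i j y. \<forall>k. norm (y $ k) \<le> B} \<noteq> {}"
    using assms by (auto intro!: exI[of _ "0 :: real^'d^'n"])
qed (auto intro!: less_imp_le mult_pos_pos lam_pos phi_pos)

lemma m_up_nonneg: assumes "B \<ge> 0" shows "m_up lam phi B \<ge> 0"
proof -
  obtain i :: 'n where True by simp
  have "0 \<le> lam i 0 * phi i i (0 $ i) (0 $ i)" using lam_pos phi_pos by (simp add: less_imp_le)
  also have "\<dots> \<le> m_up lam phi B" unfolding m_up_def using assms
    by (intro cSup_upper bddLP) (rule CollectI, rule exI[of _ i], rule exI[of _ i], rule exI[of _ 0], simp)
  finally show ?thesis .
qed

definition mn where "mn v t = Min (range (\<lambda>i. p v i t))"

lemma x_bounded: obtains B where "B \<ge> 0" "\<And>q k. q \<in> {0..b} \<Longrightarrow> norm (x q $ k) \<le> B"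
proof -
  have "bounded (x ` {0..b})"
    by (intro compact_imp_bounded compact_continuous_image x_cont compact_Icc)
  then obtain B where B: "\<And>y. y \<in> x ` {0..b} \<Longrightarrow> norm y \<le> B" unfolding bounded_iff by metis
  show ?thesis
  proof (rule that[of "max B 0"])
    fix q k assume "q \<in> {0..b}"
    hence "norm (x q) \<le> B" using B by auto
    thus "norm (x q $ k) \<le> max B 0" using Finite_Cartesian_Product.norm_nth_le[of "x q" k] by linarith
  qed simp
qed

lemma sum_a_le: assumes "q \<ge> 0" "\<forall>k. norm (x q $ k) \<le> B"
  shows "(\<Sum>j\<in>UNIV. a i j q) \<le> m_up lam phi B"
proof -
  have "(\<Sum>j\<in>UNIV. a i j q) \<le> (\<Sum>j\<in>(UNIV::'n set). m_up lam phi B / real CARD('n))"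
    by (intro sum_mono a_le assms)
  thus ?thesis by simp
qed

lemma mn_le: "mn v t \<le> p v i t"
  unfolding mn_def by simp

lemma mn_in: obtains k where "mn v t = p v k t"
proof -
  have "mn v t \<in> range (\<lambda>i. p v i t)" unfolding mn_def by (rule Min_in) auto
  thus ?thesis using that by auto
qed

lemma p_lip: "\<bar>p v k q - p v k r\<bar> \<le> norm (x q - x r) * norm v"
proof -
  have "\<bar>p v k q - p v k r\<bar> = \<bar>((x q - x r) $ k) \<bullet> v\<bar>" by (simp add: p_def inner_diff_left)
  also have "\<dots> \<le> norm ((x q - x r) $ k) * norm v" by (rule Cauchy_Schwarz_ineq2)
  also have "\<dots> \<le> norm (x q - x r) * norm v" by (intro mult_right_mono Finite_Cartesian_Product.norm_nth_le) auto
  finally show ?thesis .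
qed

lemma inv: assumes t1: "0 \<le> t1" and t12: "t1 \<le> t2" shows "mn v t1 \<le> p v i t2"
proof -
  obtain B where B0: "B \<ge> 0" and B: "\<And>q k. q \<in> {0..t2} \<Longrightarrow> norm (x q $ k) \<le> B"
    using x_bounded by metis
  define K where "K = m_up lam phi B + 1"
  have K: "K > 0" using m_up_nonneg[OF B0] by (simp add: K_def)
  have SK: "\<And>q i. q \<in> {0..t2} \<Longrightarrow> (\<Sum>j\<in>UNIV. a i j q) \<le> K"
  proof -
    fix q i assume q: "q \<in> {0..t2}"
    have "(\<Sum>j\<in>UNIV. a i j q) \<le> m_up lam phi B" using q B by (intro sum_a_le) auto
    thus "(\<Sum>j\<in>UNIV. a i j q) \<le> K" by (simp add: K_def)
  qed
  have wc: "continuous_on {t1..t2} (mn v)"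
  proof -
    have "continuous_on {t1..t2} (\<lambda>t. Min ((\<lambda>i. p v i t) ` UNIV))"
      using t1 by (intro continuous_on_Min_fin continuous_on_subset[OF p_cont[of t2]]) auto
    thus ?thesis unfolding mn_def by simp
  qed
  have "mn v t1 \<le> mn v t2"
  proof (rule dini_mono[OF t12 wc])
    fix r e :: real assume r1: "t1 \<le> r" and r2: "r < t2" and e: "e > 0"
    define c where "c = e / K / 2"
    have c: "c > 0" using e K by (simp add: c_def)
    have rin: "r \<in> {0..t2}" using r1 r2 t1 by auto
    obtain \<delta>1 where \<delta>1: "\<delta>1 > 0" and hc: "\<And>q. q \<in> {0..t2} \<Longrightarrow> dist q r < \<delta>1 \<Longrightarrow> dist (x q) (x r) < c / (norm v + 1)"
      using x_cont[of t2] rin c unfolding continuous_on_iff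
      by (metis divide_pos_pos add_nonneg_pos norm_ge_zero zero_less_one)
    have pc: "\<bar>p v k q - p v k r\<bar> \<le> c" if "q \<in> {0..t2}" "dist q r < \<delta>1" for q k
    proof -
      have n: "norm (x q - x r) < c / (norm v + 1)" using hc[OF that] by (simp add: dist_norm)
      have "\<bar>p v k q - p v k r\<bar> \<le> norm (x q - x r) * norm v" by (rule p_lip)
      also have "\<dots> \<le> c / (norm v + 1) * norm v" using n by (intro mult_right_mono) auto
      also have "\<dots> = c * (norm v / (norm v + 1))" by simp
      also have "\<dots> \<le> c * 1" using c by (intro mult_left_mono) (auto simp: divide_le_eq_1 add_nonneg_pos)
      finally show ?thesis by simp
    qed
    define \<delta> where "\<delta> = min (\<delta>1 / 2) (1 / K)"
    have \<delta>: "\<delta> > 0" using \<delta>1 K by (simp add: \<delta>_def)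
    show "\<exists>\<delta>>0. \<forall>d. 0 < d \<and> d \<le> \<delta> \<and> r + d \<le> t2 \<longrightarrow> mn v (r + d) \<ge> mn v r - e * d"
    proof (intro exI[of _ \<delta>] conjI allI impI \<delta>)
      fix d assume d: "0 < d \<and> d \<le> \<delta> \<and> r + d \<le> t2"
      have dK: "d * K \<le> 1" using d K by (simp add: \<delta>_def field_simps)
      have near: "q \<in> {0..t2} \<and> dist q r < \<delta>1" if "q \<in> {r..r+d}" for q
        using that d rin \<delta>1 by (auto simp: \<delta>_def dist_real_def)
      have "p v i (r + d) \<ge> mn v r - e * d" for i
      proof -
        define u where "u = p v i r - mn v r"
        have u0: "u \<ge> 0" using mn_le by (simp add: u_def)
        define L where "L = K * (- u - 2 * c)"
        have lower: "L \<le> (\<Sum>j\<in>UNIV. a i j q * (p v j q - p v i q))" if q: "q \<in> {r..r+d}" for q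
        proof -
          have q0: "q \<in> {0..t2}" using near[OF q] by auto
          have "(\<Sum>j\<in>UNIV. a i j q * (p v j q - p v i q)) \<ge> (\<Sum>j\<in>UNIV. a i j q * (mn v q - p v i q))"
            using q0 by (intro sum_mono mult_left_mono a_nonneg) (auto simp: mn_le)
          also have "(\<Sum>j\<in>UNIV. a i j q * (mn v q - p v i q)) = (\<Sum>j\<in>UNIV. a i j q) * (mn v q - p v i q)"
            by (simp add: sum_distrib_right)
          also have "\<dots> \<ge> K * (mn v q - p v i q)"
            using SK[OF q0] mn_le[of v q i] by (intro mult_right_mono_neg) auto
          finally have 1: "K * (mn v q - p v i q) \<le> (\<Sum>j\<in>UNIV. a i j q * (p v j q - p v i q))" .
          obtain k where k: "mn v q = p v k q" by (rule mn_in)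
          have "mn v q \<ge> mn v r - c"
            using pc[of q k] near[OF q] mn_le[of v r k] k by auto
          moreover have "p v i q \<le> p v i r + c" using pc[of q i] near[OF q] by auto
          ultimately have "mn v q - p v i q \<ge> - u - 2 * c" by (simp add: u_def)
          hence "K * (mn v q - p v i q) \<ge> L" unfolding L_def using K by simp
          with 1 show ?thesis by linarith
        qed
        have ci: "((\<lambda>_. L) has_integral d * L) {r..r+d}"
          using has_integral_const_real[where c=L and a=r and b="r+d"] d by simp
        have "d * L \<le> p v i (r + d) - p v i r"
        proof (rule has_integral_le[OF ci])
          show "((\<lambda>q. \<Sum>j\<in>UNIV. a i j q * (p v j q - p v i q)) has_integral (p v i (r + d) - p v i r)) {r..r+d}"
            using rin d by (intro p_hasint) auto
        qed (rule lower)
        moreover have "d * L = - (d * K * u) - e * d" using K by (simp add: L_def c_def algebra_simps)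
        moreover have "d * K * u \<le> u" using mult_right_mono[OF dK u0] by simp
        ultimately have "p v i (r + d) - p v i r \<ge> - u - e * d" by linarith
        thus ?thesis unfolding u_def by linarith
      qed
      thus "mn v (r + d) \<ge> mn v r - e * d" unfolding mn_def by simp
    qed
  qed
  thus ?thesis using mn_le[of v t2 i] by linarith
qed

lemma radius_ge: "norm (y $ l) \<le> radius_conf y"
proof -
  have "{norm (y $ l) |l. True} = range (\<lambda>l. norm (y $ l))" by auto
  thus ?thesis unfolding radius_conf_def by (intro Max_ge) auto
qed

lemma diam_ge: "norm (y $ i - y $ j) \<le> diam_conf y"
proof -
  have "{norm (y $ i - y $ j) |i j. True} = (\<lambda>(i, j). norm (y $ i - y $ j)) ` UNIV" by auto
  thus ?thesis unfolding diam_conf_def by (intro Max_ge) auto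
qed

lemma diam_le: assumes "\<And>i j. norm (y $ i - y $ j) \<le> c" shows "diam_conf y \<le> c"
proof -
  have "{norm (y $ i - y $ j) |i j. True} = (\<lambda>(i, j). norm (y $ i - y $ j)) ` UNIV" by auto
  thus ?thesis unfolding diam_conf_def using assms by (intro Max.boundedI) auto
qed

definition mx where "mx v t = Max (range (\<lambda>i. p v i t))"

lemma mx_ge: "p v i t \<le> mx v t"
  unfolding mx_def by simp

lemma mx_in: obtains k where "mx v t = p v k t"
proof -
  have "mx v t \<in> range (\<lambda>i. p v i t)" unfolding mx_def by (rule Max_in) auto
  thus ?thesis using that by auto
qed

lemma p_neg: "p (-v) i t = - p v i t" by (simp add: p_def)

lemma inv_up: assumes "0 \<le> t1" "t1 \<le> t2" shows "p v i t2 \<le> mx v t1"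
proof -
  obtain k where k: "mn (-v) t1 = p (-v) k t1" by (rule mn_in)
  have "mn (-v) t1 \<le> p (-v) i t2" by (rule inv[OF assms])
  hence "p v i t2 \<le> p v k t1" using k by (simp add: p_neg)
  also have "\<dots> \<le> mx v t1" by (rule mx_ge)
  finally show ?thesis .
qed

lemma ball: assumes "0 \<le> t" shows "norm (x t $ k) \<le> radius_conf (x 0)"
proof -
  define v where "v = x t $ k"
  define R where "R = radius_conf (x 0)"
  have R0: "R \<ge> 0" unfolding R_def using radius_ge[of "x 0" k] norm_ge_zero[of "x 0 $ k"] by linarith
  obtain j where j: "mx v 0 = p v j 0" by (rule mx_in)
  have "p v k t \<le> mx v 0" using assms by (intro inv_up) auto
  also have "\<dots> = (x 0 $ j) \<bullet> v" using j by (simp add: p_def)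
  also have "\<dots> \<le> norm (x 0 $ j) * norm v" by (rule norm_cauchy_schwarz)
  also have "\<dots> \<le> R * norm v" unfolding R_def by (intro mult_right_mono radius_ge) auto
  finally have "norm v * norm v \<le> R * norm v" by (simp add: p_def v_def dot_square_norm power2_eq_square)
  hence "norm v \<le> R" using R0
    by (cases "norm v = 0") (auto simp: mult_le_cancel_right)
  thus ?thesis by (simp add: v_def R_def)
qed

lemma M_int: assumes "0 \<le> s" shows "M i j integrable_on {s..t}"
proof (rule measurable_bounded_by_integrable_imp_integrable)
  show "M i j \<in> borel_measurable (lebesgue_on {s..t})"
    using assms by (intro measurable_restrict_mono[OF M_meas]) auto
  show "(\<lambda>_. 1::real) integrable_on {s..t}" by (rule integrable_const_ivl)
  show "norm (M i j q) \<le> 1" if "q \<in> {s..t}" for q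
    using M_range[of q i j] that assms by auto
qed auto

lemma G_hyp:
  fixes g h y :: "real \<Rightarrow> real"
  assumes "\<And>q. q \<in> {\<alpha>..\<beta>} \<Longrightarrow> h q - \<kappa> * y q \<le> g q"
    and "(g has_integral (y \<beta> - y \<alpha>)) {\<alpha>..\<beta>}" and "h integrable_on {\<alpha>..\<beta>}"
    and "continuous_on {\<alpha>..\<beta>} y"
  shows "y \<beta> - y \<alpha> \<ge> integral {\<alpha>..\<beta>} h - \<kappa> * integral {\<alpha>..\<beta>} y"
proof (rule has_integral_le[OF _ assms(2) assms(1)])
  have "y integrable_on {\<alpha>..\<beta>}" using assms(4) by (rule integrable_continuous_interval)
  thus "((\<lambda>q. h q - \<kappa> * y q) has_integral (integral {\<alpha>..\<beta>} h - \<kappa> * integral {\<alpha>..\<beta>} y)) {\<alpha>..\<beta>}"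
    using assms(3) by (intro has_integral_diff has_integral_mult_right integrable_integral)
qed

definition "R0 = radius_conf (x 0)"
definition "mlo = m_low lam phi R0"
definition "mup = m_up lam phi R0"
definition "NN = real CARD('n)"
definition "kap = (NN - 1) / NN * mup"
definition "eps = 1/2 * ((mlo * \<mu> * T) / (NN + mlo * \<mu> * T)) * exp (- 2 * ((NN - 1) / NN) * T * mup)"

lemma R0_nonneg: "R0 \<ge> 0"
  unfolding R0_def using radius_ge[of "x 0" undefined] norm_ge_zero[of "x 0 $ undefined"] by linarith

lemma NN2: "NN \<ge> 2" using N2 unfolding NN_def by linarith

lemma mlo_nonneg: "mlo \<ge> 0" unfolding mlo_def by (rule m_low_nonneg[OF R0_nonneg])
lemma mup_nonneg: "mup \<ge> 0" unfolding mup_def by (rule m_up_nonneg[OF R0_nonneg])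
lemma kap_nonneg: "kap \<ge> 0" unfolding kap_def using NN2 mup_nonneg by simp

lemma a_le0: "q \<ge> 0 \<Longrightarrow> a i j q \<le> mup / NN"
  unfolding mup_def NN_def R0_def using ball by (intro a_le) auto

lemma a_ge0: "q \<ge> 0 \<Longrightarrow> a i j q \<ge> mlo * M i j q / NN"
  unfolding mlo_def NN_def R0_def using ball by (intro a_ge) auto

lemma sum_off: assumes "q \<ge> 0" shows "(\<Sum>j\<in>UNIV - {i}. a i j q) \<le> kap"
proof -
  have "(\<Sum>j\<in>UNIV - {i}. a i j q) \<le> (\<Sum>j\<in>UNIV - {i}. mup / NN)"
    by (intro sum_mono a_le0 assms)
  also have "\<dots> = real (CARD('n) - 1) * (mup / NN)" by (simp add: card_Diff_singleton)
  also have "real (CARD('n) - 1) = NN - 1" using N2 unfolding NN_def by (simp add: of_nat_diff)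
  finally show ?thesis unfolding kap_def by simp
qed

lemma PW: assumes q: "q \<ge> 0" and nn: "\<And>j. p v j q \<ge> m" and l: "l \<noteq> i"
  shows "(\<Sum>j\<in>UNIV. a i j q * (p v j q - p v i q)) \<ge> a i l q * (p v l q - m) - kap * (p v i q - m)"
proof -
  have "(\<Sum>j\<in>UNIV. a i j q * (p v j q - p v i q)) = a i i q * (p v i q - p v i q) + (\<Sum>j\<in>UNIV - {i}. a i j q * (p v j q - p v i q))"
    by (rule sum.remove) auto
  also have "\<dots> = (\<Sum>j\<in>UNIV - {i}. a i j q * (p v j q - m) - a i j q * (p v i q - m))"
    by (simp add: algebra_simps)
  also have "\<dots> = (\<Sum>j\<in>UNIV - {i}. a i j q * (p v j q - m)) - (\<Sum>j\<in>UNIV - {i}. a i j q) * (p v i q - m)"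
    by (simp add: sum_subtractf sum_distrib_right)
  finally have eq: "(\<Sum>j\<in>UNIV. a i j q * (p v j q - p v i q)) = \<dots>" .
  have 1: "a i l q * (p v l q - m) \<le> (\<Sum>j\<in>UNIV - {i}. a i j q * (p v j q - m))"
    using l nn a_nonneg[OF q] by (intro member_le_sum) (auto intro: mult_nonneg_nonneg)
  have 2: "(\<Sum>j\<in>UNIV - {i}. a i j q) * (p v i q - m) \<le> kap * (p v i q - m)"
    using sum_off[OF q] nn[of i] by (intro mult_right_mono) auto
  show ?thesis unfolding eq using 1 2 by linarith
qed

lemma other: obtains l :: 'n where "l \<noteq> i"
proof -
  have "UNIV \<noteq> {i}"
  proof
    assume "UNIV = {i}"
    hence "card (UNIV :: 'n set) = card {i}" by (rule arg_cong)
    hence "CARD('n) = 1" by simp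
    with N2 show False by simp
  qed
  then obtain l where "l \<noteq> i" by auto
  thus ?thesis using that by blast
qed

lemma PW0: assumes q: "q \<ge> 0" and nn: "\<And>j. p v j q \<ge> m"
  shows "(\<Sum>j\<in>UNIV. a i j q * (p v j q - p v i q)) \<ge> - kap * (p v i q - m)"
proof -
  obtain l where l: "l \<noteq> i" by (rule other)
  have "a i l q * (p v l q - m) \<ge> 0" using a_nonneg[OF q] nn[of l] by simp
  thus ?thesis using PW[OF q nn l] by linarith
qed

lemma y_cont: "t0 \<ge> 0 \<Longrightarrow> continuous_on {t0..t} (\<lambda>q. p v i q - m)"
  by (intro continuous_intros continuous_on_subset[OF p_cont[of t]]) auto

lemma qq_bounds: "(mlo * \<mu> * T) / (NN + mlo * \<mu> * T) \<ge> 0" "(mlo * \<mu> * T) / (NN + mlo * \<mu> * T) \<le> 1"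
proof -
  have z: "mlo * \<mu> * T \<ge> 0" using mlo_nonneg mu_pos T_pos by simp
  hence pos: "NN + mlo * \<mu> * T > 0" using NN2 by linarith
  show "(mlo * \<mu> * T) / (NN + mlo * \<mu> * T) \<ge> 0" using z pos by simp
  show "(mlo * \<mu> * T) / (NN + mlo * \<mu> * T) \<le> 1" using z pos NN2 by (simp add: divide_le_eq_1)
qed

lemma step_case:
  assumes t0: "0 \<le> t0" and i0: "p v i0 t0 \<ge> (mn v t0 + mx v t0) / 2"
  shows "p v i (t0 + T) \<ge> mn v t0 + eps * (mx v t0 - mn v t0)"
proof -
  define m0 where "m0 = mn v t0"
  define D where "D = mx v t0 - m0"
  have D0: "D \<ge> 0" unfolding D_def m0_def using mn_le[of v t0 i0] mx_ge[of v i0 t0] by linarith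
  have nn: "\<And>j \<tau>. \<tau> \<ge> t0 \<Longrightarrow> p v j \<tau> \<ge> m0" unfolding m0_def using t0 by (intro inv) auto
  define \<rho> where "\<rho> = exp (- kap * T) * (D / 2)"
  have \<rho>0: "\<rho> \<ge> 0" using D0 by (simp add: \<rho>_def)
  have hyp: "y \<beta> - y \<alpha> \<ge> integral {\<alpha>..\<beta>} h - kap * integral {\<alpha>..\<beta>} y"
    if y_def: "y = (\<lambda>q. p v j q - m0)" and ab: "t0 \<le> \<alpha>" "\<alpha> \<le> \<beta>"
      and hint: "h integrable_on {\<alpha>..\<beta>}"
      and pw: "\<And>q. q \<in> {\<alpha>..\<beta>} \<Longrightarrow> h q - kap * y q \<le> (\<Sum>k\<in>UNIV. a j k q * (p v k q - p v j q))"
    for y h j \<alpha> \<beta>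
  proof (rule G_hyp[OF pw _ hint])
    show "((\<lambda>q. \<Sum>k\<in>UNIV. a j k q * (p v k q - p v j q)) has_integral (y \<beta> - y \<alpha>)) {\<alpha>..\<beta>}"
      using p_hasint[of \<alpha> \<beta> j v] ab t0 unfolding y_def by simp
    show "continuous_on {\<alpha>..\<beta>} y" unfolding y_def using ab t0 by (intro y_cont) auto
  qed auto
  have Y0: "p v i0 \<tau> - m0 \<ge> \<rho>" if \<tau>: "\<tau> \<in> {t0..t0+T}" for \<tau>
  proof -
    have "(\<lambda>q. p v i0 q - m0) \<tau> \<ge> exp (- kap * (\<tau> - t0)) * ((\<lambda>q. p v i0 q - m0) t0 + integral {t0..\<tau>} (\<lambda>_. 0))"
    proof (rule gronwall_lower[where h="\<lambda>_. 0"])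
      show "continuous_on {t0..\<tau>} (\<lambda>q. p v i0 q - m0)" using t0 by (rule y_cont)
      fix \<alpha> \<beta> assume ab: "t0 \<le> \<alpha>" "\<alpha> \<le> \<beta>" "\<beta> \<le> \<tau>"
      show "(\<lambda>q. p v i0 q - m0) \<beta> - (\<lambda>q. p v i0 q - m0) \<alpha> \<ge>
          integral {\<alpha>..\<beta>} (\<lambda>_. 0) - kap * integral {\<alpha>..\<beta>} (\<lambda>q. p v i0 q - m0)"
      proof (rule hyp[OF refl ab(1,2)])
        fix q assume q: "q \<in> {\<alpha>..\<beta>}"
        show "0 - kap * (p v i0 q - m0) \<le> (\<Sum>k\<in>UNIV. a i0 k q * (p v k q - p v i0 q))"
          using PW0[where q=q and v=v and m=m0 and i=i0] nn q ab t0 by auto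
      qed auto
    qed (use \<tau> kap_nonneg nn in auto)
    hence A: "p v i0 \<tau> - m0 \<ge> exp (- kap * (\<tau> - t0)) * (p v i0 t0 - m0)" by simp
    have B: "exp (- kap * (\<tau> - t0)) \<ge> exp (- kap * T)"
      using \<tau> kap_nonneg by (auto intro: mult_left_mono)
    have C: "p v i0 t0 - m0 \<ge> D / 2" using i0 unfolding D_def m0_def by simp
    have "exp (- kap * T) * (D / 2) \<le> exp (- kap * (\<tau> - t0)) * (p v i0 t0 - m0)"
      using B C D0 by (intro mult_mono) auto
    with A have "p v i0 \<tau> - m0 \<ge> exp (- kap * T) * (D / 2)" by linarith
    thus ?thesis by (simp add: \<rho>_def)
  qed
  define qq where "qq = (mlo * \<mu> * T) / (NN + mlo * \<mu> * T)"
  have qq0: "qq \<ge> 0" "qq \<le> 1" using qq_bounds by (auto simp: qq_def)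
  have e2: "exp (- 2 * ((NN - 1) / NN) * T * mup) = exp (- kap * T) * exp (- kap * T)"
    unfolding mult_exp_exp kap_def by (simp add: algebra_simps)
  have epsD: "eps * D = qq * exp (- kap * T) * \<rho>"
    unfolding eps_def e2 \<rho>_def qq_def by (simp add: algebra_simps)
  have ek: "exp (- kap * T) \<le> 1" using kap_nonneg T_pos by simp
  show ?thesis
  proof (cases "i = i0")
    case True
    have "qq * exp (- kap * T) * \<rho> \<le> 1 * 1 * \<rho>"
      using qq0 ek \<rho>0 by (intro mult_right_mono mult_mono) auto
    hence "eps * D \<le> \<rho>" using epsD by simp
    moreover have "\<rho> \<le> p v i (t0 + T) - m0" using Y0[of "t0 + T"] True T_pos by simp
    ultimately show ?thesis unfolding D_def m0_def by linarith
  next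
    case False
    define c where "c = mlo * \<rho> / NN"
    have c0: "c \<ge> 0" using mlo_nonneg \<rho>0 NN2 by (simp add: c_def)
    have Mint: "M i i0 integrable_on {t0..t0+T}" using t0 by (rule M_int)
    have "(\<lambda>q. p v i q - m0) (t0 + T) \<ge> exp (- kap * (t0 + T - t0)) * ((\<lambda>q. p v i q - m0) t0 + integral {t0..t0+T} (\<lambda>q. c * M i i0 q))"
    proof (rule gronwall_lower[where h="\<lambda>q. c * M i i0 q"])
      show "continuous_on {t0..t0+T} (\<lambda>q. p v i q - m0)" using t0 by (rule y_cont)
      show "(\<lambda>q. c * M i i0 q) integrable_on {t0..t0+T}" using Mint by (rule integrable_on_mult_right)
      fix \<alpha> \<beta> assume ab: "t0 \<le> \<alpha>" "\<alpha> \<le> \<beta>" "\<beta> \<le> t0 + T"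
      show "(\<lambda>q. p v i q - m0) \<beta> - (\<lambda>q. p v i q - m0) \<alpha> \<ge>
          integral {\<alpha>..\<beta>} (\<lambda>q. c * M i i0 q) - kap * integral {\<alpha>..\<beta>} (\<lambda>q. p v i q - m0)"
      proof (rule hyp[OF refl ab(1,2)])
        show "(\<lambda>q. c * M i i0 q) integrable_on {\<alpha>..\<beta>}"
          using ab t0 by (intro integrable_on_mult_right M_int) auto
        fix q assume q: "q \<in> {\<alpha>..\<beta>}"
        have q0: "q \<ge> 0" and qT: "q \<in> {t0..t0+T}" using q ab t0 by auto
        have "mlo * M i i0 q / NN * \<rho> \<le> a i i0 q * (p v i0 q - m0)"
          using a_ge0[OF q0, of i i0] Y0[OF qT] \<rho>0 a_nonneg[OF q0, of i i0]
          by (intro mult_mono) auto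
        moreover have "c * M i i0 q = mlo * M i i0 q / NN * \<rho>" by (simp add: c_def)
        moreover have "a i i0 q * (p v i0 q - m0) - kap * (p v i q - m0) \<le> (\<Sum>k\<in>UNIV. a i k q * (p v k q - p v i q))"
          using PW[where q=q and v=v and m=m0 and l=i0 and i=i] False nn q ab q0 by auto
        ultimately show "c * M i i0 q - kap * (p v i q - m0) \<le> (\<Sum>k\<in>UNIV. a i k q * (p v k q - p v i q))"
          by linarith
      qed
    qed (use T_pos kap_nonneg nn c0 M_range t0 in auto)
    hence 1: "p v i (t0 + T) - m0 \<ge> exp (- kap * T) * ((p v i t0 - m0) + c * integral {t0..t0+T} (M i i0))"
      by simp
    have PEi: "integral {t0..t0+T} (M i i0) \<ge> \<mu> * T"
      using PE[OF t0, of i i0] T_pos by (simp add: field_simps)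
    have "exp (- kap * T) * (c * (\<mu> * T)) \<le> exp (- kap * T) * ((p v i t0 - m0) + c * integral {t0..t0+T} (M i i0))"
    proof (rule mult_left_mono)
      have "c * (\<mu> * T) \<le> c * integral {t0..t0+T} (M i i0)" using c0 PEi by (rule mult_left_mono[OF _ c0] | simp add: mult_left_mono)
      moreover have "p v i t0 - m0 \<ge> 0" using nn[of t0 i] by simp
      ultimately show "c * (\<mu> * T) \<le> (p v i t0 - m0) + c * integral {t0..t0+T} (M i i0)" by linarith
    qed simp
    moreover have "qq * exp (- kap * T) * \<rho> \<le> exp (- kap * T) * (c * (\<mu> * T))"
    proof -
      have z: "mlo * \<mu> * T \<ge> 0" using mlo_nonneg mu_pos T_pos by simp
      have "qq \<le> mlo * \<mu> * T / NN" unfolding qq_def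
        using z NN2 by (intro divide_left_mono) (auto intro!: mult_pos_pos add_pos_nonneg)
      hence "qq * (exp (- kap * T) * \<rho>) \<le> mlo * \<mu> * T / NN * (exp (- kap * T) * \<rho>)"
        using \<rho>0 by (intro mult_right_mono) auto
      thus ?thesis by (simp add: c_def algebra_simps)
    qed
    ultimately show ?thesis using 1 epsD unfolding D_def m0_def by linarith
  qed
qed

lemma eps_le: "eps \<le> 1"
proof -
  have qq: "(mlo * \<mu> * T) / (NN + mlo * \<mu> * T) \<le> 1"
    using qq_bounds by auto
  have "0 \<le> 2 * ((NN - 1) / NN) * T * mup"
    using NN2 T_pos mup_nonneg by (intro mult_nonneg_nonneg) auto
  hence "- 2 * ((NN - 1) / NN) * T * mup \<le> 0" by (simp only: mult_minus_left neg_le_0_iff_le)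
  hence ex: "exp (- 2 * ((NN - 1) / NN) * T * mup) \<le> 1" by simp
  have Y: "(mlo * \<mu> * T) / (NN + mlo * \<mu> * T) * exp (- 2 * ((NN - 1) / NN) * T * mup) \<le> 1 * 1"
    using qq ex by (intro mult_mono) auto
  have E: "eps = 1/2 * ((mlo * \<mu> * T) / (NN + mlo * \<mu> * T) * exp (- 2 * ((NN - 1) / NN) * T * mup))"
    unfolding eps_def by (rule mult.assoc)
  have "1/2 * ((mlo * \<mu> * T) / (NN + mlo * \<mu> * T) * exp (- 2 * ((NN - 1) / NN) * T * mup)) \<le> 1/2 * (1 * 1)"
    using Y by (rule mult_left_mono) simp
  hence "eps \<le> 1/2 * (1 * 1)" unfolding E .
  thus ?thesis by simp
qed

lemma range_step: assumes t0: "0 \<le> t0"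
  shows "mx v (t0 + T) - mn v (t0 + T) \<le> (1 - eps) * (mx v t0 - mn v t0)"
proof -
  obtain i0 where i0: "mx v t0 = p v i0 t0" by (rule mx_in)
  have c: "p v i0 t0 \<ge> (mn v t0 + mx v t0) / 2" using i0 mn_le[of v t0 i0] by simp
  obtain k where k: "mn v (t0 + T) = p v k (t0 + T)" by (rule mn_in)
  obtain k' where k': "mx v (t0 + T) = p v k' (t0 + T)" by (rule mx_in)
  have "mn v (t0 + T) \<ge> mn v t0 + eps * (mx v t0 - mn v t0)"
    unfolding k by (rule step_case[OF t0 c])
  moreover have "mx v (t0 + T) \<le> mx v t0" unfolding k' using t0 T_pos by (intro inv_up) auto
  ultimately show ?thesis by (simp add: algebra_simps)
qed

lemma diam_step: assumes t0: "0 \<le> t0"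
  shows "diam_conf (x (t0 + T)) \<le> (1 - eps) * diam_conf (x t0)"
proof (rule diam_le)
  fix i j
  define v where "v = x (t0 + T) $ i - x (t0 + T) $ j"
  have D0: "diam_conf (x t0) \<ge> 0" using diam_ge[of "x t0" i i] by simp
  have e0: "1 - eps \<ge> 0" using eps_le by simp
  have "norm v * norm v = p v i (t0 + T) - p v j (t0 + T)"
    by (simp add: v_def p_def inner_diff_left[symmetric] dot_square_norm power2_eq_square)
  also have "\<dots> \<le> mx v (t0 + T) - mn v (t0 + T)" using mx_ge mn_le by (intro diff_mono)
  also have "\<dots> \<le> (1 - eps) * (mx v t0 - mn v t0)" by (rule range_step[OF t0])
  also have "\<dots> \<le> (1 - eps) * (diam_conf (x t0) * norm v)"
  proof (rule mult_left_mono[OF _ e0])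
    obtain a where a: "mx v t0 = p v a t0" by (rule mx_in)
    obtain b where b: "mn v t0 = p v b t0" by (rule mn_in)
    have "mx v t0 - mn v t0 = (x t0 $ a - x t0 $ b) \<bullet> v" by (simp add: a b p_def inner_diff_left)
    also have "\<dots> \<le> norm (x t0 $ a - x t0 $ b) * norm v" by (rule norm_cauchy_schwarz)
    also have "\<dots> \<le> diam_conf (x t0) * norm v" by (intro mult_right_mono diam_ge) auto
    finally show "mx v t0 - mn v t0 \<le> diam_conf (x t0) * norm v" .
  qed
  finally have "norm v * norm v \<le> ((1 - eps) * diam_conf (x t0)) * norm v" by (simp add: algebra_simps)
  hence "norm v \<le> (1 - eps) * diam_conf (x t0)" using e0 D0
    by (cases "norm v = 0") (auto simp: mult_le_cancel_right)
  thus "norm (x (t0 + T) $ i - x (t0 + T) $ j) \<le> (1 - eps) * diam_conf (x t0)" by (simp add: v_def)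
qed

lemma main: "diam_conf (x (real n * T)) \<le> (1 - eps) ^ n * diam_conf (x 0)"
proof (induction n)
  case 0
  then show ?case by simp
next
  case (Suc n)
  have "diam_conf (x (real (Suc n) * T)) = diam_conf (x (real n * T + T))" by (simp add: algebra_simps)
  also have "\<dots> \<le> (1 - eps) * diam_conf (x (real n * T))" using T_pos by (intro diam_step) simp
  also have "\<dots> \<le> (1 - eps) * ((1 - eps) ^ n * diam_conf (x 0))"
    using Suc.IH eps_le by (intro mult_left_mono) auto
  finally show ?case by (simp add: algebra_simps)
qed

end

theorem corollary2:
  fixes lam :: "'n::finite \<Rightarrow> real^'d::finite^'n \<Rightarrow> real"
    and phi :: "'n \<Rightarrow> 'n \<Rightarrow> real^'d \<Rightarrow> real^'d \<Rightarrow> real"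
    and M :: "'n \<Rightarrow> 'n \<Rightarrow> real \<Rightarrow> real"
    and x :: "real \<Rightarrow> real^'d^'n"
    and T \<mu> :: real
  assumes N2: "CARD('n) \<ge> 2"
    and M_meas: "\<And>i j. M i j \<in> borel_measurable (lebesgue_on {0..})"
    and M_range: "\<And>i j t. t \<ge> 0 \<Longrightarrow> 0 \<le> M i j t \<and> M i j t \<le> 1"
    and lam_lip: "\<And>i. \<exists>L. L-lipschitz_on UNIV (lam i)"
    and lam_pos: "\<And>i y. lam i y > 0"
    and phi_lip: "\<And>i j. \<exists>L. L-lipschitz_on UNIV (\<lambda>(a, b). phi i j a b)"
    and phi_pos: "\<And>i j a b. phi i j a b > 0"
    and sol: "caratheodory_solution lam phi M x"
    and T_pos: "T > 0" and mu_pos: "\<mu> > 0"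
    and PE: "\<And>i j t. t \<ge> 0 \<Longrightarrow> (1 / T) * integral {t..t+T} (M i j) \<ge> \<mu>"
  shows "\<forall>n::nat. diam_conf (x (real n * T)) \<le>
     (1 - 1/2 * ((m_low lam phi (radius_conf (x 0)) * \<mu> * T)
                 / (real CARD('n) + m_low lam phi (radius_conf (x 0)) * \<mu> * T))
          * exp (- 2 * ((real CARD('n) - 1) / real CARD('n)) * T * m_up lam phi (radius_conf (x 0)))) ^ n
       * diam_conf (x 0)"
proof
  fix n :: nat
  interpret S: sys lam phi M x T \<mu>
    by (unfold_locales; fact assms)
  show "diam_conf (x (real n * T)) \<le>
     (1 - 1/2 * ((m_low lam phi (radius_conf (x 0)) * \<mu> * T)
                 / (real CARD('n) + m_low lam phi (radius_conf (x 0)) * \<mu> * T))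
          * exp (- 2 * ((real CARD('n) - 1) / real CARD('n)) * T * m_up lam phi (radius_conf (x 0)))) ^ n
       * diam_conf (x 0)"
    using S.main[of n] unfolding S.eps_def S.mlo_def S.mup_def S.R0_def S.NN_def .
qed


end
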